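(* Let $p\in\mathcal H(3,d)$ with $p(x_1,x_2,x_3)=a(x_1,x_2)+x_3\,b(x_1,x_2)$ for polynomials $a,b$. Suppose two monomials $m_1,m_2$ in the variables $x_1,x_2$ only, both of degree $d$, occur in $p$ and satisfy $\delta(m_1,m_2)\ge 4$. Then $p$ has at least $d+1$ distinct monomials that depend on $x_3$.
   Context: $\mathcal H(3,d)$ is the set of real polynomials in $x_1,x_2,x_3$ of total degree exactly $d$, with all coefficients nonnegative, such that $p(x)=1$ whenever $x_1+x_2+x_3=1$. For monomials $m_1=x_1^{\alpha_1}\cdots x_n^{\alpha_n}$ and $m_2=x_1^{\beta_1}\cdots x_n^{\beta_n}$, $\delta(m_1,m_2)=\sum_j|\alpha_j-\beta_j|$. *)

theory Defs
  imports Complex_Main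
begin

text \<open>A real polynomial in x1,x2,x3 is represented by its coefficient function on
exponent triples (a1,a2,a3), required to have finite support.\<close>

type_synonym mono3 = "nat \<times> nat \<times> nat"

definition e1 :: "mono3 \<Rightarrow> nat" where "e1 \<alpha> = fst \<alpha>"
definition e2 :: "mono3 \<Rightarrow> nat" where "e2 \<alpha> = fst (snd \<alpha>)"
definition e3 :: "mono3 \<Rightarrow> nat" where "e3 \<alpha> = snd (snd \<alpha>)"

definition mdeg :: "mono3 \<Rightarrow> nat" where "mdeg \<alpha> = e1 \<alpha> + e2 \<alpha> + e3 \<alpha>"

definition supp3 :: "(mono3 \<Rightarrow> real) \<Rightarrow> mono3 set" where
  "supp3 c = {\<alpha>. c \<alpha> \<noteq> 0}"

definition eval3 :: "(mono3 \<Rightarrow> real) \<Rightarrow> real \<Rightarrow> real \<Rightarrow> real \<Rightarrow> real" where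
  "eval3 c x1 x2 x3 = (\<Sum>\<alpha>\<in>supp3 c. c \<alpha> * x1 ^ e1 \<alpha> * x2 ^ e2 \<alpha> * x3 ^ e3 \<alpha>)"

definition delta3 :: "mono3 \<Rightarrow> mono3 \<Rightarrow> nat" where
  "delta3 \<alpha> \<beta> = nat \<bar>int (e1 \<alpha>) - int (e1 \<beta>)\<bar> + nat \<bar>int (e2 \<alpha>) - int (e2 \<beta>)\<bar>
                  + nat \<bar>int (e3 \<alpha>) - int (e3 \<beta>)\<bar>"

definition H3 :: "nat \<Rightarrow> (mono3 \<Rightarrow> real) \<Rightarrow> bool" where
  "H3 d c \<longleftrightarrow> finite (supp3 c)
     \<and> (\<forall>\<alpha>. c \<alpha> \<ge> 0)
     \<and> (\<forall>\<alpha>\<in>supp3 c. mdeg \<alpha> \<le> d) \<and> (\<exists>\<alpha>\<in>supp3 c. mdeg \<alpha> = d)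
     \<and> (\<forall>x1 x2 x3. x1 + x2 + x3 = 1 \<longrightarrow> eval3 c x1 x2 x3 = 1)"

end

theory Submission
  imports Defs
begin

lemma poly2_zero:
  fixes F :: "nat \<Rightarrow> nat \<Rightarrow> real"
  assumes "\<And>x y. (\<Sum>i\<le>N. \<Sum>j\<le>N. F i j * x^i * y^j) = 0"
  and "i \<le> N" "j \<le> N"
  shows "F i j = 0"
proof -
  have A: "(\<Sum>j\<le>N. F i j * y^j) = 0" for y
  proof -
    have "\<forall>x. (\<Sum>i\<le>N. (\<Sum>j\<le>N. F i j * y^j) * x^i) = 0"
    proof
      fix x
      have "(\<Sum>i\<le>N. (\<Sum>j\<le>N. F i j * y^j) * x^i) = (\<Sum>i\<le>N. \<Sum>j\<le>N. F i j * x^i * y^j)"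
        unfolding sum_distrib_right by (intro sum.cong refl) (simp add: mult.commute mult.left_commute)
      then show "(\<Sum>i\<le>N. (\<Sum>j\<le>N. F i j * y^j) * x^i) = 0" using assms(1) by simp
    qed
    then have "\<forall>i\<le>N. (\<Sum>j\<le>N. F i j * y^j) = 0" by (simp only: polyfun_eq_0)
    then show ?thesis using assms(2) by simp
  qed
  have "\<forall>y. (\<Sum>j\<le>N. F i j * y^j) = 0" using A by simp
  then have "\<forall>j\<le>N. F i j = 0" by (simp only: polyfun_eq_0)
  then show ?thesis using assms(3) by simp
qed

lemma eval_split:
  assumes fin: "finite (supp3 c)" and e3: "\<forall>\<alpha>\<in>supp3 c. e3 \<alpha> \<le> 1"
    and bnd: "\<forall>\<alpha>\<in>supp3 c. mdeg \<alpha> \<le> d"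
  shows "eval3 c x y z = (\<Sum>i\<le>d. \<Sum>j\<le>d. c (i,j,0) * x^i * y^j)
           + z * (\<Sum>i\<le>d. \<Sum>j\<le>d. c (i,j,1) * x^i * y^j)"
proof -
  let ?S = "{..d} \<times> {..d} \<times> {..(1::nat)}"
  let ?f = "\<lambda>\<alpha>. c \<alpha> * x ^ e1 \<alpha> * y ^ e2 \<alpha> * z ^ e3 \<alpha>"
  have sub: "supp3 c \<subseteq> ?S"
  proof
    fix \<alpha> assume a: "\<alpha> \<in> supp3 c"
    obtain i j k where "\<alpha> = (i,j,k)" by (cases \<alpha>) auto
    then show "\<alpha> \<in> ?S" using bnd a e3 by (auto simp: mdeg_def e1_def e2_def e3_def)
  qed
  have "eval3 c x y z = sum ?f ?S"
    unfolding eval3_def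
    by (rule sum.mono_neutral_left) (use sub in \<open>auto simp: supp3_def\<close>)
  also have "\<dots> = (\<Sum>i\<le>d. \<Sum>p\<in>{..d}\<times>{..(1::nat)}. ?f (i,p))"
    unfolding sum.cartesian_product by (rule sum.cong) auto
  also have "\<dots> = (\<Sum>i\<le>d. \<Sum>j\<le>d. \<Sum>k\<le>(1::nat). ?f (i,j,k))"
  proof (rule sum.cong[OF refl])
    fix i
    show "(\<Sum>p\<in>{..d}\<times>{..(1::nat)}. ?f (i,p)) = (\<Sum>j\<le>d. \<Sum>k\<le>(1::nat). ?f (i,j,k))"
      unfolding sum.cartesian_product by (rule sum.cong) auto
  qed
  also have "\<dots> = (\<Sum>i\<le>d. \<Sum>j\<le>d. c (i,j,0) * x^i * y^j + z * (c (i,j,1) * x^i * y^j))"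
    by (intro sum.cong refl) (simp add: e1_def e2_def e3_def)
  also have "\<dots> = (\<Sum>i\<le>d. \<Sum>j\<le>d. c (i,j,0) * x^i * y^j)
           + z * (\<Sum>i\<le>d. \<Sum>j\<le>d. c (i,j,1) * x^i * y^j)"
    by (simp only: sum.distrib sum_distrib_left)
  finally show ?thesis .
qed


lemma box_ext:
  fixes G :: "nat \<Rightarrow> nat \<Rightarrow> real"
  assumes "\<And>i j. i > d \<or> j > d \<Longrightarrow> G i j = 0"
  shows "(\<Sum>i\<le>Suc d. \<Sum>j\<le>Suc d. G i j * x^i * y^j) = (\<Sum>i\<le>d. \<Sum>j\<le>d. G i j * x^i * y^j)"
  using assms by (simp add: sum.atMost_Suc)

lemma shift_x:
  fixes G :: "nat \<Rightarrow> nat \<Rightarrow> real"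
  shows "(\<Sum>i\<le>Suc d. \<Sum>j\<le>M. (if i = 0 then 0 else G (i-1) j) * x^i * y^j)
        = x * (\<Sum>i\<le>d. \<Sum>j\<le>M. G i j * x^i * y^j)"
  by (simp only: sum.atMost_Suc_shift) (simp add: sum_distrib_left mult_ac)

lemma shift_y:
  fixes G :: "nat \<Rightarrow> nat \<Rightarrow> real"
  shows "(\<Sum>i\<le>M. \<Sum>j\<le>Suc d. (if j = 0 then 0 else G i (j-1)) * x^i * y^j)
        = y * (\<Sum>i\<le>M. \<Sum>j\<le>d. G i j * x^i * y^j)"
  by (simp only: sum.atMost_Suc_shift) (simp add: sum_distrib_left mult_ac)

lemma delta_sum:
  "(\<Sum>i\<le>M. \<Sum>j\<le>N. (if i = 0 \<and> j = 0 then 1 else 0) * (x::real)^i * y^j) = 1"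
proof -
  have "(\<Sum>j\<le>N. (if i = 0 \<and> j = 0 then 1 else 0) * (x::real)^i * y^j) = (if i = 0 then 1 else 0)" for i
  proof (cases "i = 0")
    case True
    have "(\<lambda>j. (if i = 0 \<and> j = 0 then 1 else 0) * (x::real)^i * y^j) = (\<lambda>j. if j = 0 then 1 else 0)"
      using True by auto
    then have "(\<Sum>j\<le>N. (if i = 0 \<and> j = 0 then 1 else 0) * (x::real)^i * y^j) = (\<Sum>j\<le>N. if j = 0 then 1 else 0)"
      by (simp only:)
    then show ?thesis using True by simp
  qed simp
  then show ?thesis by (simp add: sum.delta)
qed


theorem lemma8:
  fixes d :: nat and c :: "mono3 \<Rightarrow> real" and m1 m2 :: mono3
  assumes "H3 d c"
    and "\<forall>\<alpha>\<in>supp3 c. e3 \<alpha> \<le> 1"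
    and "m1 \<in> supp3 c" and "m2 \<in> supp3 c"
    and "e3 m1 = 0" and "e3 m2 = 0"
    and "mdeg m1 = d" and "mdeg m2 = d"
    and "delta3 m1 m2 \<ge> 4"
  shows "card {\<alpha>\<in>supp3 c. e3 \<alpha> \<ge> 1} \<ge> d + 1"
proof -
  have fin: "finite (supp3 c)" and nonneg: "\<And>\<alpha>. c \<alpha> \<ge> 0"
    and bnd: "\<forall>\<alpha>\<in>supp3 c. mdeg \<alpha> \<le> d"
    and ev: "\<And>x1 x2 x3. x1 + x2 + x3 = 1 \<Longrightarrow> eval3 c x1 x2 x3 = 1"
    using assms(1) unfolding H3_def by auto
  define A where "A i j = c (i,j,0)" for i j
  define B where "B i j = c (i,j,1)" for i j
  define Bm where "Bm i j = (if i = 0 then 0 else B (i-1) j)" for i j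
  define Bn where "Bn i j = (if j = 0 then 0 else B i (j-1))" for i j
  define D :: "nat \<Rightarrow> nat \<Rightarrow> real" where "D i j = (if i = 0 \<and> j = 0 then 1 else 0)" for i j
  define F where "F i j = A i j + B i j - Bm i j - Bn i j - D i j" for i j
  have zero: "c (i,j,k) = 0" if "i + j + k > d" for i j k
  proof (rule ccontr)
    assume "c (i,j,k) \<noteq> 0"
    then have "(i,j,k) \<in> supp3 c" by (simp add: supp3_def)
    then show False using bnd that by (auto simp: mdeg_def e1_def e2_def e3_def)
  qed
  have A0: "A i j = 0" if "i > d \<or> j > d" for i j
    using zero[of i j 0] that unfolding A_def by auto
  have B0: "B i j = 0" if "i + j \<ge> d" for i j
    using zero[of i j 1] that unfolding B_def by auto
  have B0': "B i j = 0" if "i > d \<or> j > d" for i j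
    using B0 that by auto
  let ?P = "\<lambda>G x y. (\<Sum>i\<le>Suc d. \<Sum>j\<le>Suc d. G i j * x^i * y^j)"
  have id: "?P F x y = 0" for x y :: real
  proof -
    have "eval3 c x y (1 - x - y) = 1" by (rule ev) simp
    moreover have "?P A x y = (\<Sum>i\<le>d. \<Sum>j\<le>d. A i j * x^i * y^j)"
      by (rule box_ext) (rule A0)
    moreover have "?P B x y = (\<Sum>i\<le>d. \<Sum>j\<le>d. B i j * x^i * y^j)"
      by (rule box_ext) (rule B0')
    ultimately have e: "?P A x y + (1 - x - y) * ?P B x y = 1"
      using eval_split[OF fin assms(2) bnd, of x y "1-x-y"]
      unfolding A_def B_def by simp
    have "?P Bm x y = x * ?P B x y"
    proof -
      have "?P Bm x y = x * (\<Sum>i\<le>d. \<Sum>j\<le>Suc d. B i j * x^i * y^j)"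
        unfolding Bm_def by (rule shift_x)
      also have "(\<Sum>i\<le>d. \<Sum>j\<le>Suc d. B i j * x^i * y^j) = ?P B x y"
        using B0' by (simp add: sum.atMost_Suc[of _ d])
      finally show ?thesis .
    qed
    moreover have "?P Bn x y = y * ?P B x y"
    proof -
      have "?P Bn x y = y * (\<Sum>i\<le>Suc d. \<Sum>j\<le>d. B i j * x^i * y^j)"
        unfolding Bn_def by (rule shift_y)
      also have "(\<Sum>i\<le>Suc d. \<Sum>j\<le>d. B i j * x^i * y^j) = ?P B x y"
        using B0' by (simp add: sum.atMost_Suc[of _ d])
      finally show ?thesis .
    qed
    moreover have "?P D x y = 1" unfolding D_def by (rule delta_sum)
    moreover have "?P F x y = ?P A x y + ?P B x y - ?P Bm x y - ?P Bn x y - ?P D x y"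
      unfolding F_def by (simp add: sum.distrib sum_subtractf algebra_simps)
    ultimately show ?thesis using e by (simp add: algebra_simps)
  qed
  have R: "A i j + B i j = Bm i j + Bn i j + D i j" if "i \<le> Suc d" "j \<le> Suc d" for i j
    using poly2_zero[of F "Suc d", OF id that] unfolding F_def by simp
  have Bnn: "B i j \<ge> 0" for i j unfolding B_def by (rule nonneg)
  have Ann: "A i j \<ge> 0" for i j unfolding A_def by (rule nonneg)
  have down: "\<exists>p q. p + q = i + j - 1 \<and> B p q > 0 \<and> p \<le> i \<and> i \<le> p + 1"
    if ij: "i + j \<ge> 1" "i \<le> Suc d" "j \<le> Suc d" and pos: "A i j + B i j > 0" for i j
  proof -
    have "D i j = 0" using ij(1) unfolding D_def by auto
    then have s: "Bm i j + Bn i j > 0" using R[OF ij(2,3)] pos by simp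
    show ?thesis
    proof (cases "i > 0 \<and> Bm i j > 0")
      case True
      then have "B (i-1) j > 0" unfolding Bm_def by (simp split: if_splits)
      then show ?thesis using True by (intro exI[of _ "i-1"] exI[of _ j]) auto
    next
      case False
      have "Bm i j \<ge> 0" unfolding Bm_def using Bnn by simp
      then have "Bn i j > 0" using False s unfolding Bm_def by (auto split: if_splits)
      then have "j > 0" "B i (j-1) > 0" unfolding Bn_def by (auto split: if_splits)
      then show ?thesis by (intro exI[of _ i] exI[of _ "j-1"]) auto
    qed
  qed
  obtain i1 j1 where m1: "m1 = (i1,j1,0)" using assms(5) by (cases m1) (auto simp: e3_def)
  obtain i2 j2 where m2: "m2 = (i2,j2,0)" using assms(6) by (cases m2) (auto simp: e3_def)
  have s1: "i1 + j1 = d" and s2: "i2 + j2 = d"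
    using assms(7,8) m1 m2 by (auto simp: mdeg_def e1_def e2_def e3_def)
  have dl: "nat \<bar>int i1 - int i2\<bar> + nat \<bar>int j1 - int j2\<bar> \<ge> 4"
    using assms(9) m1 m2 by (simp add: delta3_def e1_def e2_def e3_def)
  have far: "i1 + 2 \<le> i2 \<or> i2 + 2 \<le> i1" using dl s1 s2 by linarith
  have d1: "d \<ge> 1" using far s1 s2 by linarith
  have a1: "A i1 j1 > 0" using assms(3) m1 nonneg[of m1] unfolding A_def supp3_def
    by (simp add: order_le_neq_trans)
  have a2: "A i2 j2 > 0" using assms(4) m2 nonneg[of m2] unfolding A_def supp3_def
    by (simp add: order_le_neq_trans)
  obtain p1 q1 where P1: "p1 + q1 = d - 1" "B p1 q1 > 0" "p1 \<le> i1" "i1 \<le> p1 + 1"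
    using down[of i1 j1] a1 Bnn[of i1 j1] s1 d1 by auto
  obtain p2 q2 where P2: "p2 + q2 = d - 1" "B p2 q2 > 0" "p2 \<le> i2" "i2 \<le> p2 + 1"
    using down[of i2 j2] a2 Bnn[of i2 j2] s2 d1 by auto
  have neq: "(p1,q1) \<noteq> (p2,q2)" using far P1 P2 by auto
  have lev: "\<exists>p q. p + q = d - 1 - n \<and> B p q > 0" if "n < d" for n
    using that
  proof (induction n)
    case 0
    have "p1 + q1 = d - 1 - 0 \<and> B p1 q1 > 0" using P1(1,2) by simp
    then show ?case by blast
  next
    case (Suc n)
    have "n < d" using Suc.prems by simp
    then obtain p q where pq: "p + q = d - 1 - n" "B p q > 0" using Suc.IH by blast
    have c1: "p + q \<ge> 1" using pq(1) Suc.prems by simp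
    have c2: "p \<le> Suc d" "q \<le> Suc d" using pq(1) by simp_all
    have c3: "A p q + B p q > 0" using pq(2) Ann[of p q] by simp
    obtain p' q' where "p' + q' = p + q - 1" "B p' q' > 0"
      using down[OF c1 c2 c3] by blast
    moreover have "p + q - 1 = d - 1 - Suc n" using pq(1) by simp
    ultimately show ?case by metis
  qed
  have "\<forall>k<d. \<exists>pq. fst pq + snd pq = k \<and> B (fst pq) (snd pq) > 0"
  proof (intro allI impI)
    fix k assume "k < d"
    then obtain p q where "p + q = d - 1 - (d - 1 - k)" "B p q > 0" using lev[of "d-1-k"] by auto
    then show "\<exists>pq. fst pq + snd pq = k \<and> B (fst pq) (snd pq) > 0" using \<open>k < d\<close>
      by (intro exI[of _ "(p,q)"]) auto
  qed
  then obtain f where f: "\<And>k. k < d \<Longrightarrow> fst (f k) + snd (f k) = k \<and> B (fst (f k)) (snd (f k)) > 0"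
    by metis
  define g where "g k = (if k < d - 1 then f k else if k = d - 1 then (p1,q1) else (p2,q2))" for k
  define h where "h k = (fst (g k), snd (g k), 1::nat)" for k
  have glev: "fst (g k) + snd (g k) = min k (d-1)" if "k \<le> d" for k
    using f[of k] P1 P2 that unfolding g_def by auto
  have gpos: "B (fst (g k)) (snd (g k)) > 0" if "k \<le> d" for k
    using f[of k] P1 P2 that unfolding g_def by auto
  have inj: "inj_on h {..d}"
  proof (rule inj_onI)
    fix a b assume ab: "a \<in> {..d}" "b \<in> {..d}" "h a = h b"
    then have gab: "g a = g b" unfolding h_def by (simp add: prod_eq_iff)
    have mn: "min a (d-1) = min b (d-1)" using glev[of a] glev[of b] ab gab by simp
    have gd: "g (d-1) \<noteq> g d" using neq d1 unfolding g_def by auto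
    show "a = b"
    proof (rule ccontr)
      assume nab: "a \<noteq> b"
      have ge: "a \<ge> d - 1 \<and> b \<ge> d - 1"
      proof (rule ccontr)
        assume "\<not> (a \<ge> d - 1 \<and> b \<ge> d - 1)"
        then show False using mn nab unfolding min_def by (simp split: if_splits)
      qed
      have ad: "a \<le> d" "b \<le> d" using ab(1,2) by simp_all
      have "(a = d - 1 \<and> b = d) \<or> (a = d \<and> b = d - 1)" using ge ad nab d1 by linarith
      then show False using gab gd by metis
    qed
  qed
  let ?T = "{\<alpha>\<in>supp3 c. e3 \<alpha> \<ge> 1}"
  have sub: "h ` {..d} \<subseteq> ?T"
  proof
    fix \<alpha> assume "\<alpha> \<in> h ` {..d}"
    then obtain k where k: "k \<le> d" "\<alpha> = h k" by auto
    then have "c \<alpha> \<noteq> 0" using gpos[OF k(1)] unfolding h_def B_def by auto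
    then show "\<alpha> \<in> ?T" using k unfolding h_def supp3_def e3_def by auto
  qed
  have "finite ?T" using fin by auto
  then have "card (h ` {..d}) \<le> card ?T" using sub by (rule card_mono)
  moreover have "card (h ` {..d}) = d + 1" using inj by (simp add: card_image)
  ultimately show ?thesis by simp
qed

end
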